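(* Let $p$ be a prime, $G$ a virtually free pro-$p$ group and $F$ an open normal free pro-$p$ subgroup of $G$, and suppose $C_F(t)=1$ for every torsion element $t\in G$. Then any two distinct maximal finite subgroups $A\neq B$ of $G$ satisfy $A\cap B=1$.
   Context: $C_F(t)$ denotes the centralizer of $t$ in $F$. *)

theory Defs
  imports "HOL-Analysis.Analysis" "HOL-Algebra.Coset"
begin

definition topological_group :: "('a, 'b) monoid_scheme \<Rightarrow> 'a topology \<Rightarrow> bool" where
  "topological_group G T \<longleftrightarrow> group G \<and> topspace T = carrier G \<and>
     continuous_map (prod_topology T T) T (\<lambda>z. fst z \<otimes>\<^bsub>G\<^esub> snd z) \<and>
     continuous_map T T (\<lambda>x. inv\<^bsub>G\<^esub> x)"

definition profinite_group :: "('a, 'b) monoid_scheme \<Rightarrow> 'a topology \<Rightarrow> bool" where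
  "profinite_group G T \<longleftrightarrow> topological_group G T \<and> compact_space T \<and> Hausdorff_space T \<and>
     (\<forall>x\<in>topspace T. connected_component_of_set T x = {x})"

definition pro_p_group :: "nat \<Rightarrow> ('a, 'b) monoid_scheme \<Rightarrow> 'a topology \<Rightarrow> bool" where
  "pro_p_group p G T \<longleftrightarrow> profinite_group G T \<and>
     (\<forall>N. N \<lhd> G \<and> openin T N \<longrightarrow> (\<exists>k. card (rcosets\<^bsub>G\<^esub> N) = p ^ k))"

text \<open>Finite p-groups (represented on carriers of type nat; every finite group is
  isomorphic to such a one).\<close>
definition finite_p_group :: "nat \<Rightarrow> nat monoid \<Rightarrow> bool" where
  "finite_p_group p P \<longleftrightarrow> group P \<and> finite (carrier P) \<and> (\<exists>k. card (carrier P) = p ^ k)"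

text \<open>Free pro-p group on a set X converging to 1 (Ribes--Zalesskii): every map from X
  to a finite p-group sending almost all of X to 1 extends uniquely to a continuous
  homomorphism.\<close>
definition free_pro_p_group :: "nat \<Rightarrow> ('a, 'b) monoid_scheme \<Rightarrow> 'a topology \<Rightarrow> bool" where
  "free_pro_p_group p G T \<longleftrightarrow> pro_p_group p G T \<and>
     (\<exists>X \<subseteq> carrier G.
        (\<forall>U. openin T U \<and> \<one>\<^bsub>G\<^esub> \<in> U \<longrightarrow> finite (X - U)) \<and>
        (\<forall>(P :: nat monoid) \<phi>. finite_p_group p P \<and> \<phi> \<in> X \<rightarrow> carrier P \<and>
            finite {x \<in> X. \<phi> x \<noteq> \<one>\<^bsub>P\<^esub>} \<longrightarrow>
          (\<exists>h \<in> hom G P. continuous_map T (discrete_topology (carrier P)) h \<and>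
              (\<forall>x\<in>X. h x = \<phi> x) \<and>
              (\<forall>h' \<in> hom G P. continuous_map T (discrete_topology (carrier P)) h' \<and>
                  (\<forall>x\<in>X. h' x = \<phi> x) \<longrightarrow> (\<forall>g\<in>carrier G. h' g = h g)))))"

definition virtually_free_pro_p_group :: "nat \<Rightarrow> ('a, 'b) monoid_scheme \<Rightarrow> 'a topology \<Rightarrow> bool" where
  "virtually_free_pro_p_group p G T \<longleftrightarrow> pro_p_group p G T \<and>
     (\<exists>F. subgroup F G \<and> openin T F \<and>
          free_pro_p_group p (G\<lparr>carrier := F\<rparr>) (subtopology T F))"

definition centralizer_in :: "('a, 'b) monoid_scheme \<Rightarrow> 'a set \<Rightarrow> 'a \<Rightarrow> 'a set" where
  "centralizer_in G F t = {f \<in> F. f \<otimes>\<^bsub>G\<^esub> t = t \<otimes>\<^bsub>G\<^esub> f}"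

definition torsion_elem :: "('a, 'b) monoid_scheme \<Rightarrow> 'a \<Rightarrow> bool" where
  "torsion_elem G t \<longleftrightarrow> t \<in> carrier G \<and> t \<noteq> \<one>\<^bsub>G\<^esub> \<and> (\<exists>n::nat. n > 0 \<and> t [^]\<^bsub>G\<^esub> n = \<one>\<^bsub>G\<^esub>)"

definition maximal_finite_subgroup :: "('a, 'b) monoid_scheme \<Rightarrow> 'a set \<Rightarrow> bool" where
  "maximal_finite_subgroup G A \<longleftrightarrow> subgroup A G \<and> finite A \<and>
     (\<forall>B. subgroup B G \<and> finite B \<and> A \<subseteq> B \<longrightarrow> B = A)"

end

theory Submission
  imports Defs "HOL-Algebra.Group_Action"
begin

lemma (in group) rcoset_action:
  assumes "subgroup H G"
  shows "group_action G (rcosets H) (\<lambda>g. \<lambda>X\<in>rcosets H. X #> inv g)"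
proof -
  let ?E = "rcosets H"
  let ?\<phi> = "\<lambda>g. \<lambda>X\<in>rcosets H. X #> inv g"
  have Hs: "H \<subseteq> carrier G" using assms subgroup.subset by blast
  have closed: "X #> g \<in> ?E" if X: "X \<in> ?E" and g: "g \<in> carrier G" for X g
  proof -
    obtain a where a: "a \<in> carrier G" "X = H #> a" using X unfolding RCOSETS_def by blast
    then show ?thesis using coset_mult_assoc[OF Hs a(1) g] g rcosetsI[OF Hs] by simp
  qed
  have sub: "X \<subseteq> carrier G" if "X \<in> ?E" for X
    using that assms rcosets_part_G by auto
  have bij: "?\<phi> g \<in> Bij ?E" if g: "g \<in> carrier G" for g
  proof -
    have "bij_betw (?\<phi> g) ?E ?E"
    proof (rule bij_betw_byWitness[where f'="\<lambda>X. X #> g"])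
      show "\<forall>a\<in>?E. ?\<phi> g a #> g = a"
        using g sub by (auto simp: coset_mult_assoc)
      show "\<forall>a\<in>?E. ?\<phi> g (a #> g) = a"
        using g sub closed by (auto simp: coset_mult_assoc)
      show "?\<phi> g ` ?E \<subseteq> ?E" using closed g by auto
      show "(\<lambda>X. X #> g) ` ?E \<subseteq> ?E" using closed g by auto
    qed
    then show ?thesis unfolding Bij_def by auto
  qed
  have hom: "?\<phi> \<in> hom G (BijGroup ?E)"
    unfolding hom_def
  proof (intro CollectI conjI ballI)
    show "?\<phi> \<in> carrier G \<rightarrow> carrier (BijGroup ?E)" using bij by (auto simp: BijGroup_def)
    fix x y assume x: "x \<in> carrier G" and y: "y \<in> carrier G"
    have "?\<phi> (x \<otimes> y) = compose ?E (?\<phi> x) (?\<phi> y)"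
    proof (rule ext)
      fix X show "?\<phi> (x \<otimes> y) X = compose ?E (?\<phi> x) (?\<phi> y) X"
        using x y closed sub by (auto simp: compose_def coset_mult_assoc inv_mult_group)
    qed
    then show "?\<phi> (x \<otimes> y) = ?\<phi> x \<otimes>\<^bsub>BijGroup ?E\<^esub> ?\<phi> y"
      using bij x y by (simp add: BijGroup_def)
  qed
  show ?thesis unfolding group_action_def group_hom_def group_hom_axioms_def
    using hom group_BijGroup is_group by auto
qed

lemma (in group) pgroup_normalizer_grows:
  assumes p: "prime p" and fin: "finite (carrier G)" and ord: "card (carrier G) = p^n"
    and H: "subgroup H G" and ne: "H \<noteq> carrier G"
  shows "\<exists>g \<in> carrier G - H. \<forall>h\<in>H. g \<otimes> h \<otimes> inv g \<in> H"
proof (rule ccontr)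
  assume nc: "\<not> ?thesis"
  let ?E = "rcosets H"
  let ?\<phi> = "\<lambda>g. \<lambda>X\<in>rcosets H. X #> inv g"
  let ?K = "G\<lparr>carrier := H\<rparr>"
  interpret A: group_action ?K ?E ?\<phi>
    using group_action.induced_action[OF rcoset_action[OF H] H] .
  have Hs: "H \<subseteq> carrier G" using H subgroup.subset by blast
  have lag: "card ?E * card H = p^n" using lagrange[OF H] ord by (simp add: order_def)
  have pn0: "p^n \<noteq> 0" using p by (simp add: prime_gt_0_nat)
  have finE: "finite ?E" using lag pn0 by (metis card.infinite mult_is_0)
  have "card H dvd p^n" using lag by (metis dvd_triv_right)
  then obtain i where i: "card H = p^i" using divides_primepow_nat[OF p] by blast
  have "card ?E dvd p^n" using lag by (metis dvd_triv_left)
  then obtain j where j: "card ?E = p^j" using divides_primepow_nat[OF p] by blast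
  have "card ?E \<noteq> 1"
  proof
    assume "card ?E = 1"
    then have "card H = card (carrier G)" using lag ord by simp
    then show False using ne Hs fin by (metis card_subset_eq)
  qed
  then have "j \<noteq> 0" using j by auto
  then have pE: "p dvd card ?E" using j by (simp add: dvd_power)
  have ordK: "order ?K = p^i" using i by (simp add: order_def)
  have orb_pow: "\<exists>k. card (orbit ?K ?\<phi> X) = p^k" if "X \<in> ?E" for X
  proof -
    have "card (orbit ?K ?\<phi> X) dvd p^i"
      using A.orbit_stabilizer_theorem[OF that] ordK by (metis dvd_triv_left)
    then show ?thesis using divides_primepow_nat[OF p] by blast
  qed
  have key: "X = H" if X: "X \<in> ?E" and c1: "card (orbit ?K ?\<phi> X) = 1" for X
  proof -
    have "X \<in> orbit ?K ?\<phi> X" using A.orbit_refl[OF X] .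
    then have oX: "orbit ?K ?\<phi> X = {X}" using c1 by (metis card_1_singletonE singletonD)
    obtain a where a: "a \<in> carrier G" "X = H #> a" using X by (auto simp: RCOSETS_def)
    have fix1: "X #> inv h = X" if h: "h \<in> H" for h
    proof -
      have "?\<phi> h X \<in> orbit ?K ?\<phi> X" unfolding orbit_def using h by auto
      then show ?thesis using oX X by simp
    qed
    have "a \<otimes> h \<otimes> inv a \<in> H" if h: "h \<in> H" for h
    proof -
      have hc: "h \<in> carrier G" using h Hs by blast
      have ih: "inv h \<in> H" by (rule subgroup.m_inv_closed[OF H h])
      have "X #> inv (inv h) = X" using fix1[OF ih] .
      then have "H #> (a \<otimes> h) = H #> a" using a hc Hs by (simp add: coset_mult_assoc)
      then have "a \<otimes> h \<in> H #> a" using rcos_self[OF _ H, of "a \<otimes> h"] a hc by simp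
      then show ?thesis using subgroup.rcos_module_imp[OF H is_group a(1)] by simp
    qed
    then have "a \<in> H" using nc a(1) by blast
    then show ?thesis using a coset_join2[OF a(1) H] by simp
  qed
  have HE: "H \<in> ?E" using rcosetsI[OF Hs one_closed] Hs by simp
  have oH: "orbit ?K ?\<phi> H = {H}"
  proof -
    have fx: "?\<phi> h H = H" if "h \<in> H" for h
      using HE that H coset_join2[of "inv h" H] Hs subgroup.m_inv_closed[OF H that] by auto
    have "orbit ?K ?\<phi> H = {?\<phi> h H | h. h \<in> H}" by (simp add: orbit_def)
    also have "\<dots> = {H}"
    proof (intro equalityI subsetI)
      fix x assume "x \<in> {?\<phi> h H | h. h \<in> H}"
      then obtain h where "h \<in> H" "x = ?\<phi> h H" by blast
      then show "x \<in> {H}" using fx by simp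
    next
      fix x assume "x \<in> {H}"
      then have "x = ?\<phi> \<one> H" using fx[OF subgroup.one_closed[OF H]] by simp
      then show "x \<in> {?\<phi> h H | h. h \<in> H}" using subgroup.one_closed[OF H] by blast
    qed
    finally show ?thesis .
  qed
  let ?O = "orbits ?K ?E ?\<phi>"
  have Oim: "?O = (\<lambda>X. orbit ?K ?\<phi> X) ` ?E" by (auto simp: orbits_def)
  have finO: "finite ?O" using Oim finE by simp
  have sumO: "(\<Sum>Q\<in>?O. card Q) = card ?E"
    using A.disjoint_sum[OF finE, of "\<lambda>_. 1::nat"] ext[of "sum (\<lambda>x. 1::nat)" card, OF card_eq_sum[symmetric]] by simp
  have HO: "{H} \<in> ?O" unfolding Oim using image_eqI[where f="\<lambda>X. orbit ?K ?\<phi> X", OF oH[symmetric] HE] .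
  have "p dvd card Q" if o: "Q \<in> ?O - {{H}}" for Q
  proof -
    obtain X where X: "X \<in> ?E" "Q = orbit ?K ?\<phi> X" using o unfolding Oim by (auto simp del: )
    obtain k where k: "card Q = p^k" using orb_pow X by blast
    have "k \<noteq> 0"
    proof
      assume "k = 0"
      then have "X = H" using key X k by simp
      then show False using o X oH by simp
    qed
    then show ?thesis using k by (simp add: dvd_power)
  qed
  then have dS: "p dvd (\<Sum>Q\<in>?O - {{H}}. card Q)" by (intro dvd_sum) auto
  have S: "card ?E = 1 + (\<Sum>Q\<in>?O - {{H}}. card Q)"
    using sum.remove[OF finO HO, of card] sumO by simp
  have "p dvd 1 + (\<Sum>Q\<in>?O - {{H}}. card Q)" using pE S by simp
  then have "p dvd 1" using dvd_add_left_iff[OF dS] by blast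
  then show False using p by simp
qed

lemma (in group) pow_in_subgroup:
  assumes "subgroup H G" "x \<in> H" shows "x [^] (n::nat) \<in> H"
  using assms by (induction n) (auto simp: subgroup.one_closed subgroup.m_closed)

lemma (in group) finite_subgroup_torsion:
  assumes H: "subgroup H G" and fin: "finite H" and x: "x \<in> H"
  shows "\<exists>n::nat. n > 0 \<and> x [^] n = \<one>"
proof -
  have xc: "x \<in> carrier G" by (rule subgroup.mem_carrier[OF H x])
  have "(\<lambda>n::nat. x [^] n) ` UNIV \<subseteq> H" using pow_in_subgroup[OF H x] by auto
  then have "finite ((\<lambda>n::nat. x [^] n) ` UNIV)" using fin finite_subset by blast
  then have "\<not> inj (\<lambda>n::nat. x [^] n)" using finite_imageD by blast
  then obtain i j :: nat where ij: "i \<noteq> j" "x [^] i = x [^] j" unfolding inj_def by blast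
  have "\<exists>n::nat. n > 0 \<and> x [^] n = \<one>" if "i < j" "x [^] i = x [^] j" for i j :: nat
  proof -
    have "x [^] i \<otimes> x [^] (j - i) = x [^] (i + (j - i))" using nat_pow_mult[OF xc] by simp
    also have "\<dots> = x [^] i" using that by simp
    finally have "x [^] i \<otimes> x [^] (j - i) = x [^] i" .
    then have "x [^] (j - i) = \<one>" using xc by simp
    then show ?thesis using that(1) zero_less_diff by blast
  qed
  then show ?thesis using ij by (metis linorder_neqE_nat)
qed

lemma (in group) conj_subset_eq:
  assumes C: "C \<subseteq> carrier G" "finite C" and a: "a \<in> carrier G"
    and cl: "\<forall>c\<in>C. a \<otimes> c \<otimes> inv a \<in> C"
  shows "a <# C #> inv a = C"
proof -
  have img: "a <# C #> inv a = (\<lambda>c. a \<otimes> c \<otimes> inv a) ` C"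
    unfolding l_coset_def r_coset_def by auto
  have "inj_on (\<lambda>c. a \<otimes> c \<otimes> inv a) C"
  proof (rule inj_onI)
    fix x y assume x: "x \<in> C" and y: "y \<in> C" and eq: "a \<otimes> x \<otimes> inv a = a \<otimes> y \<otimes> inv a"
    have xc: "x \<in> carrier G" and yc: "y \<in> carrier G" using x y C by auto
    from eq have "a \<otimes> x = a \<otimes> y" using xc yc a by simp
    then show "x = y" using xc yc a by (simp add: Units_eq)
  qed
  then have "card ((\<lambda>c. a \<otimes> c \<otimes> inv a) ` C) = card C" by (rule card_image)
  moreover have "(\<lambda>c. a \<otimes> c \<otimes> inv a) ` C \<subseteq> C" using cl by auto
  ultimately show ?thesis using img C(2) by (metis card_subset_eq)
qed

lemma (in group) normalizer_iff:
  assumes "C \<subseteq> carrier G"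
  shows "g \<in> normalizer G C \<longleftrightarrow> g \<in> carrier G \<and> g <# C #> inv g = C"
  using assms unfolding normalizer_def stabilizer_def by auto

locale vf_setting = group G for G (structure) +
  fixes F :: "'a set" and p k :: nat
  assumes Fn: "F \<lhd> G" and p: "prime p" and R: "card (rcosets F) = p^k"
    and tf: "\<forall>t. torsion_elem G t \<longrightarrow> centralizer_in G F t = {\<one>}"
begin

lemma FS: "subgroup F G" using Fn normal_imp_subgroup by blast

lemma finR: "finite (rcosets F)"
proof (rule ccontr)
  assume "infinite (rcosets F)"
  then have "card (rcosets F) = 0" by simp
  then show False using R p by (simp add: prime_gt_0_nat)
qed

lemma torsion_central_one:
  assumes t: "torsion_elem G t" and f: "f \<in> F" and c: "f \<otimes> t = t \<otimes> f"
  shows "f = \<one>"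
proof -
  have "f \<in> centralizer_in G F t" unfolding centralizer_in_def using f c by simp
  then show ?thesis using tf t by simp
qed

lemma fin_inter:
  assumes H: "subgroup H G" and fin: "finite H"
  shows "H \<inter> F \<subseteq> {\<one>}"
proof
  fix x assume x: "x \<in> H \<inter> F"
  show "x \<in> {\<one>}"
  proof (rule ccontr)
    assume nx: "x \<notin> {\<one>}"
    have "torsion_elem G x" unfolding torsion_elem_def
      using nx subgroup.mem_carrier[OF H] x finite_subgroup_torsion[OF H fin] by auto
    then have "x = \<one>" using torsion_central_one x by auto
    then show False using nx by simp
  qed
qed

lemma triv_bound:
  assumes H: "subgroup H G" and tr: "H \<inter> F \<subseteq> {\<one>}"
  shows "finite H" "card H \<le> card (rcosets F)" "\<exists>m. card H = p^m"
proof -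
  have Hc: "\<And>h. h \<in> H \<Longrightarrow> h \<in> carrier G" using subgroup.mem_carrier[OF H] .
  have inj: "inj_on (\<lambda>h. F #> h) H"
  proof (rule inj_onI)
    fix a b assume a: "a \<in> H" and b: "b \<in> H" and eq: "F #> a = F #> b"
    have "a \<in> F #> b" using eq rcos_self[OF Hc[OF a] FS] by simp
    then have "a \<otimes> inv b \<in> F" using subgroup.rcos_module_imp[OF FS is_group Hc[OF b]] by simp
    moreover have "a \<otimes> inv b \<in> H" using a b subgroup.m_closed[OF H] subgroup.m_inv_closed[OF H] by simp
    ultimately have "a \<otimes> inv b = \<one>" using tr by auto
    moreover have "a = (a \<otimes> inv b) \<otimes> b" using Hc[OF a] Hc[OF b] by (simp add: m_assoc)
    ultimately show "a = b" using Hc[OF b] by simp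
  qed
  have sub: "(\<lambda>h. F #> h) ` H \<subseteq> rcosets F"
    using Hc rcosetsI[OF subgroup.subset[OF FS]] by auto
  have "finite ((\<lambda>h. F #> h) ` H)" using sub finR finite_subset by blast
  then show fH: "finite H" using inj finite_imageD by blast
  show "card H \<le> card (rcosets F)" using card_inj_on_le[OF inj sub finR] .
  interpret N: normal F G using Fn .
  interpret Q: group_hom G "G Mod F" "\<lambda>a. F #> a"
    unfolding group_hom_def group_hom_axioms_def
    using is_group N.factorgroup_is_group N.r_coset_hom_Mod by blast
  have sg: "subgroup ((\<lambda>h. F #> h) ` H) (G Mod F)" using Q.subgroup_img_is_subgroup[OF H] .
  have "card (rcosets\<^bsub>G Mod F\<^esub> ((\<lambda>h. F #> h) ` H)) * card ((\<lambda>h. F #> h) ` H) = order (G Mod F)"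
    using group.lagrange[OF N.factorgroup_is_group sg] .
  moreover have "order (G Mod F) = p^k" using R by (simp add: order_def FactGroup_def)
  moreover have "card ((\<lambda>h. F #> h) ` H) = card H" using card_image[OF inj] .
  ultimately have "card H dvd p^k" by (metis dvd_triv_right)
  then show "\<exists>m. card H = p^m" using divides_primepow_nat[OF p] by blast
qed

lemma norm_finite:
  assumes C: "subgroup C G" and finC: "finite C" and ne: "C \<noteq> {\<one>}"
  shows "subgroup (normalizer G C) G" "finite (normalizer G C)" "C \<subseteq> normalizer G C"
proof -
  interpret N: normal F G using Fn .
  have Cs: "C \<subseteq> carrier G" using subgroup.subset[OF C] .
  show NS: "subgroup (normalizer G C) G" using normalizer_imp_subgroup[OF Cs] .
  have one: "\<one> \<in> C" using subgroup.one_closed[OF C] .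
  obtain c where c: "c \<in> C" "c \<noteq> \<one>" using ne one by blast
  have cc: "c \<in> carrier G" using c Cs by auto
  have tc: "torsion_elem G c" unfolding torsion_elem_def
    using c cc finite_subgroup_torsion[OF C finC c(1)] by auto
  have "normalizer G C \<inter> F \<subseteq> {\<one>}"
  proof
    fix f assume f: "f \<in> normalizer G C \<inter> F"
    have fc: "f \<in> carrier G" and conj: "f <# C #> inv f = C" and fF: "f \<in> F"
      using f normalizer_iff[OF Cs] by auto
    have "f \<otimes> c \<otimes> inv f \<in> f <# C #> inv f"
      unfolding l_coset_def r_coset_def using c by auto
    then have x: "f \<otimes> c \<otimes> inv f \<in> C" using conj by simp
    define k where "k = (f \<otimes> c \<otimes> inv f) \<otimes> inv c"
    have kC: "k \<in> C" unfolding k_def using x c subgroup.m_closed[OF C] subgroup.m_inv_closed[OF C] by simp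
    have "c \<otimes> inv f \<otimes> inv c \<in> F" using N.inv_op_closed2[OF cc] fF subgroup.m_inv_closed[OF FS] by simp
    then have "f \<otimes> (c \<otimes> inv f \<otimes> inv c) \<in> F" using fF subgroup.m_closed[OF FS] by simp
    moreover have "f \<otimes> (c \<otimes> inv f \<otimes> inv c) = k" unfolding k_def using fc cc by (simp add: m_assoc)
    ultimately have kF: "k \<in> F" by simp
    have "k = \<one>" using kC kF fin_inter[OF C finC] by auto
    moreover have "f \<otimes> c \<otimes> inv f = k \<otimes> c" unfolding k_def using fc cc by (simp add: m_assoc)
    ultimately have e1: "f \<otimes> c \<otimes> inv f = c" using cc by simp
    have "f \<otimes> c = (f \<otimes> c \<otimes> inv f) \<otimes> f" using fc cc by (simp add: m_assoc)
    then have "f \<otimes> c = c \<otimes> f" using e1 by simp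
    then have "f = \<one>" using torsion_central_one[OF tc fF] by simp
    then show "f \<in> {\<one>}" by simp
  qed
  then show "finite (normalizer G C)" using triv_bound(1)[OF NS] by simp
  show "C \<subseteq> normalizer G C"
  proof
    fix x assume x: "x \<in> C"
    have xc: "x \<in> carrier G" using x Cs by auto
    have "x <# C = C" using coset_join3[OF xc C x] .
    moreover have "C #> inv x = C" using coset_join2[OF _ C] xc x subgroup.m_inv_closed[OF C x] by simp
    ultimately have "x <# C #> inv x = C" by simp
    then show "x \<in> normalizer G C" using normalizer_iff[OF Cs] xc by simp
  qed
qed

lemma maxfin_props:
  assumes "maximal_finite_subgroup G A"
  shows "subgroup A G" "finite A" "card A \<le> card (rcosets F)" "\<exists>m. card A = p^m"
proof -
  show A: "subgroup A G" "finite A" using assms unfolding maximal_finite_subgroup_def by auto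
  show "card A \<le> card (rcosets F)" "\<exists>m. card A = p^m" using triv_bound[OF A(1) fin_inter[OF A]] by auto
qed

lemma exists_max:
  assumes H: "subgroup H G" and finH: "finite H"
  shows "\<exists>M. maximal_finite_subgroup G M \<and> H \<subseteq> M"
proof -
  let ?S = "{K. subgroup K G \<and> finite K \<and> H \<subseteq> K}"
  have bd: "card ` ?S \<subseteq> {..card (rcosets F)}"
    using triv_bound(2) fin_inter by auto
  then have fS: "finite (card ` ?S)" using finite_subset by blast
  have HS: "H \<in> ?S" using H finH by auto
  then have ne: "card ` ?S \<noteq> {}" by blast
  have "Max (card ` ?S) \<in> card ` ?S" using Max_in[OF fS ne] .
  then obtain K where K: "K \<in> ?S" "card K = Max (card ` ?S)" by auto
  have "maximal_finite_subgroup G K" unfolding maximal_finite_subgroup_def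
  proof (intro conjI allI impI)
    show "subgroup K G" "finite K" using K by auto
    fix B assume B: "subgroup B G \<and> finite B \<and> K \<subseteq> B"
    then have "B \<in> ?S" using K by auto
    then have "card B \<le> card K" using K(2) Max_ge[OF fS] by auto
    moreover have "card K \<le> card B" using B card_mono by blast
    ultimately show "B = K" using B card_subset_eq by (metis antisym)
  qed
  then show ?thesis using K by auto
qed

lemma main_aux:
  "card (rcosets F) - card (A \<inter> B) = d \<Longrightarrow> maximal_finite_subgroup G A \<Longrightarrow>
   maximal_finite_subgroup G B \<Longrightarrow> A \<noteq> B \<Longrightarrow> A \<inter> B = {\<one>}"
proof (induction d arbitrary: A B rule: less_induct)
  case (less d A B)
  note mA = maxfin_props[OF less.prems(2)]
  note mB = maxfin_props[OF less.prems(3)]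
  let ?C = "A \<inter> B"
  have CS: "subgroup ?C G" using subgroups_Inter_pair[OF mA(1) mB(1)] .
  have finC: "finite ?C" using mA(2) by simp
  have one: "\<one> \<in> ?C" using subgroup.one_closed[OF CS] .
  show ?case
  proof (rule ccontr)
    assume ne: "?C \<noteq> {\<one>}"
    note Nn = norm_finite[OF CS finC ne]
    obtain M where M: "maximal_finite_subgroup G M" "normalizer G ?C \<subseteq> M"
      using exists_max[OF Nn(1) Nn(2)] by blast
    have Cs: "?C \<subseteq> carrier G" using subgroup.subset[OF CS] .
    have half: "X = M" if X: "maximal_finite_subgroup G X" and CX: "?C \<subseteq> X" and CneX: "?C \<noteq> X" for X
    proof (rule ccontr)
      assume XM: "X \<noteq> M"
      note mX = maxfin_props[OF X]
      note mM = maxfin_props[OF M(1)]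
      obtain m where m: "card X = p^m" using mX(4) by blast
      have gX: "group (G\<lparr>carrier := X\<rparr>)" using subgroup_imp_group[OF mX(1)] .
      have sgC: "subgroup ?C (G\<lparr>carrier := X\<rparr>)" using subgroup_incl[OF CS mX(1) CX] .
      obtain a where a: "a \<in> X" "a \<notin> ?C"
        and cl0: "\<forall>h\<in>?C. a \<otimes> h \<otimes> inv\<^bsub>G\<lparr>carrier := X\<rparr>\<^esub> a \<in> ?C"
        using group.pgroup_normalizer_grows[OF gX p _ _ sgC, of m] mX(2) m CneX by auto
      have ac: "a \<in> carrier G" using subgroup.mem_carrier[OF mX(1) a(1)] .
      have cl: "\<forall>h\<in>?C. a \<otimes> h \<otimes> inv a \<in> ?C" using cl0 m_inv_consistent[OF mX(1) a(1)] by simp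
      have "a <# ?C #> inv a = ?C" using conj_subset_eq[OF Cs finC ac cl] .
      then have "a \<in> normalizer G ?C" using normalizer_iff[OF Cs] ac by simp
      then have aM: "a \<in> M" using M(2) by blast
      have XMS: "subgroup (X \<inter> M) G" using subgroups_Inter_pair[OF mX(1) mM(1)] .
      have finXM: "finite (X \<inter> M)" using mX(2) by simp
      have CM: "?C \<subseteq> M" using Nn(3) M(2) by blast
      have "insert a ?C \<subseteq> X \<inter> M" using a aM CX CM by blast
      then have "card (insert a ?C) \<le> card (X \<inter> M)" using card_mono[OF finXM] by blast
      then have lt: "card ?C < card (X \<inter> M)" using a(2) finC by simp
      have "card (X \<inter> M) \<le> card (rcosets F)"
        using triv_bound(2)[OF XMS fin_inter[OF XMS finXM]] .
      then have "card (rcosets F) - card (X \<inter> M) < d" using lt less.prems(1) by linarith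
      then have "X \<inter> M = {\<one>}" using less.IH[OF _ refl X M(1) XM] by blast
      then have "?C \<subseteq> {\<one>}" using CX CM by blast
      then show False using ne one by blast
    qed
    have "?C \<noteq> A"
    proof
      assume "?C = A"
      then have "A \<subseteq> B" by blast
      then have "B = A" using less.prems(2) mB(1,2) unfolding maximal_finite_subgroup_def by blast
      then show False using less.prems(4) by simp
    qed
    then have "A = M" using half[OF less.prems(2)] by blast
    have "?C \<noteq> B"
    proof
      assume "?C = B"
      then have "B \<subseteq> A" by blast
      then have "A = B" using less.prems(3) mA(1,2) unfolding maximal_finite_subgroup_def by blast
      then show False using less.prems(4) by simp
    qed
    then have "B = M" using half[OF less.prems(3)] by blast
    then show False using \<open>A = M\<close> less.prems(4) by simp
  qed
qed

end

theorem mainTheorem6: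
  fixes p :: nat and G :: "('a, 'b) monoid_scheme" and T :: "'a topology" and F :: "'a set"
  assumes "prime p"
    and "virtually_free_pro_p_group p G T"
    and "F \<lhd> G" and "openin T F"
    and "free_pro_p_group p (G\<lparr>carrier := F\<rparr>) (subtopology T F)"
    and "\<forall>t. torsion_elem G t \<longrightarrow> centralizer_in G F t = {\<one>\<^bsub>G\<^esub>}"
    and "maximal_finite_subgroup G A" and "maximal_finite_subgroup G B" and "A \<noteq> B"
  shows "A \<inter> B = {\<one>\<^bsub>G\<^esub>}"
proof -
  have pp: "pro_p_group p G T" using assms(2) unfolding virtually_free_pro_p_group_def by blast
  then have grp: "group G"
    unfolding pro_p_group_def profinite_group_def topological_group_def by blast
  obtain k where k: "card (rcosets\<^bsub>G\<^esub> F) = p^k"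
    using pp assms(3,4) unfolding pro_p_group_def by blast
  interpret vf_setting G F p k
    unfolding vf_setting_def vf_setting_axioms_def using grp assms(1,3,6) k by blast
  show ?thesis using main_aux[OF refl assms(7,8,9)] .
qed

end
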